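(* There is no monoid over $\mathbb{C}^2$ — i.e. no set $M\subseteq\mathbb{C}^2$ of pairwise distinct vectors with an associative linear map $\mu:\mathbb{C}^2\otimes\mathbb{C}^2\to\mathbb{C}^2$ and a unit $e\in M$ — such that the multiplication $(a,b)\mapsto\mu(a\otimes b)$ on $M$ is isomorphic to the multiplication of the group $\hat Q$ of unit quaternions.
   Context: A monoid over $\mathbb{C}^2$ is a set $M\subseteq\mathbb{C}^2$ of pairwise distinct vectors, a linear map $\mu:\mathbb{C}^2\otimes\mathbb{C}^2\to\mathbb{C}^2$ with $\mu\circ(\mu\otimes\mathrm{id}) = \mu\circ(\mathrm{id}\otimes\mu)$, and $e\in M$ with $\mu(e\otimes m)=m=\mu(m\otimes e)$ for all $m\in M$. $\hat Q$ is the (non-commutative) group of quaternions $q_w+iq_x+jq_y+kq_z$ of unit length under quaternion multiplication ($i^2=j^2=k^2=ijk=-1$). *)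

theory Defs
  imports "HOL-Analysis.Analysis"
begin

text \<open>Quaternions q_w + i q_x + j q_y + k q_z, with Hamilton multiplication
  (i^2 = j^2 = k^2 = ijk = -1).\<close>
datatype quat = Quat (qw: real) (qx: real) (qy: real) (qz: real)

definition qmult :: "quat \<Rightarrow> quat \<Rightarrow> quat" where
  "qmult p q = Quat
     (qw p * qw q - qx p * qx q - qy p * qy q - qz p * qz q)
     (qw p * qx q + qx p * qw q + qy p * qz q - qz p * qy q)
     (qw p * qy q - qx p * qz q + qy p * qw q + qz p * qx q)
     (qw p * qz q + qx p * qy q - qy p * qx q + qz p * qw q)"

definition unit_quats :: "quat set" where
  "unit_quats = {q. sqrt ((qw q)\<^sup>2 + (qx q)\<^sup>2 + (qy q)\<^sup>2 + (qz q)\<^sup>2) = 1}"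

text \<open>A linear map mu : C^2 (tensor) C^2 -> C^2 is given by its structure constants
  c i j k = k-th coordinate of mu(b_i (tensor) b_j); applied to a pure tensor a (tensor) b.\<close>
definition tensor_mult :: "(2 \<Rightarrow> 2 \<Rightarrow> 2 \<Rightarrow> complex) \<Rightarrow> complex^2 \<Rightarrow> complex^2 \<Rightarrow> complex^2" where
  "tensor_mult c a b = (\<chi> k. \<Sum>i\<in>UNIV. \<Sum>j\<in>UNIV. c i j k * a$i * b$j)"

text \<open>Associativity mu o (mu (tensor) id) = mu o (id (tensor) mu), checked on pure tensors
  (which span the triple tensor product).\<close>
definition assoc_tensor :: "(2 \<Rightarrow> 2 \<Rightarrow> 2 \<Rightarrow> complex) \<Rightarrow> bool" where
  "assoc_tensor c \<longleftrightarrow> (\<forall>a b d. tensor_mult c (tensor_mult c a b) d = tensor_mult c a (tensor_mult c b d))"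

definition monoid_over_C2 :: "(complex^2) set \<Rightarrow> (2 \<Rightarrow> 2 \<Rightarrow> 2 \<Rightarrow> complex) \<Rightarrow> complex^2 \<Rightarrow> bool" where
  "monoid_over_C2 M c e \<longleftrightarrow> assoc_tensor c \<and> e \<in> M \<and>
     (\<forall>m\<in>M. tensor_mult c e m = m \<and> tensor_mult c m e = m)"

end

theory Submission
  imports Defs
begin

lemma tm_comp: "tensor_mult c a b $ k =
   c 1 1 k * a$1 * b$1 + c 1 2 k * a$1 * b$2 + c 2 1 k * a$2 * b$1 + c 2 2 k * a$2 * b$2"
  unfolding tensor_mult_def by (simp add: sum_2)

lemma tm_lin_left: "tensor_mult c (s *s x + t *s y) z = s *s tensor_mult c x z + t *s tensor_mult c y z"
  unfolding vec_eq_iff by (simp add: tm_comp algebra_simps)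

lemma tm_lin_right: "tensor_mult c z (s *s x + t *s y) = s *s tensor_mult c z x + t *s tensor_mult c z y"
  unfolding vec_eq_iff by (simp add: tm_comp algebra_simps)

lemma tm_scale_left: "tensor_mult c (s *s x) z = s *s tensor_mult c x z"
  unfolding vec_eq_iff by (simp add: tm_comp algebra_simps)

lemma tm_scale_right: "tensor_mult c z (s *s x) = s *s tensor_mult c z x"
  unfolding vec_eq_iff by (simp add: tm_comp algebra_simps)

lemma tm_zero_left: "tensor_mult c 0 z = 0"
  unfolding vec_eq_iff by (simp add: tm_comp)

lemma tm_comm:
  assumes ex: "tensor_mult c e x = x" and xe: "tensor_mult c x e = x"
    and ey: "tensor_mult c e y = y" and ye: "tensor_mult c y e = y"
  shows "tensor_mult c x y = tensor_mult c y x"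
proof (cases "e = 0")
  case True
  then have "x = 0" "y = 0" using ex ey tm_zero_left by metis+
  then show ?thesis by simp
next
  case enz: False
  define D where "D = e$1 * x$2 - e$2 * x$1"
  show ?thesis
  proof (cases "D = 0")
    case False
    define \<alpha> where "\<alpha> = (y$1 * x$2 - y$2 * x$1) / D"
    define \<beta> where "\<beta> = (e$1 * y$2 - e$2 * y$1) / D"
    have c1: "y$1 = \<alpha> * e$1 + \<beta> * x$1" using False
      unfolding \<alpha>_def \<beta>_def by (simp add: divide_simps D_def) algebra
    have c2: "y$2 = \<alpha> * e$2 + \<beta> * x$2" using False
      unfolding \<alpha>_def \<beta>_def by (simp add: divide_simps D_def) algebra
    have yeq: "y = \<alpha> *s e + \<beta> *s x"
      unfolding vec_eq_iff forall_2 using c1 c2 by simp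
    show ?thesis
      by (subst (1 2) yeq, simp only: tm_lin_left tm_lin_right ex xe)
  next
    case True
    obtain a where xa: "x = a *s e"
    proof (cases "e$1 = 0")
      case False
      show ?thesis
        apply (rule that[of "x$1 / e$1"])
        unfolding vec_eq_iff forall_2 using False True
        by (simp add: D_def field_simps)
    next
      case z: True
      then have "e$2 \<noteq> 0" using enz unfolding vec_eq_iff forall_2 by simp
      then show ?thesis
        apply (intro that[of "x$2 / e$2"])
        unfolding vec_eq_iff forall_2 using z True
        by (simp add: D_def field_simps)
    qed
    show ?thesis
      by (subst (1 2) xa, simp only: tm_scale_left tm_scale_right ey ye)
  qed
qed

theorem corollary4p3:
  shows "\<not> (\<exists>M c e \<phi>. monoid_over_C2 M c e \<and> bij_betw \<phi> unit_quats M \<and>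
            (\<forall>p\<in>unit_quats. \<forall>q\<in>unit_quats. \<phi> (qmult p q) = tensor_mult c (\<phi> p) (\<phi> q)))"
proof
  assume "\<exists>M c e \<phi>. monoid_over_C2 M c e \<and> bij_betw \<phi> unit_quats M \<and>
            (\<forall>p\<in>unit_quats. \<forall>q\<in>unit_quats. \<phi> (qmult p q) = tensor_mult c (\<phi> p) (\<phi> q))"
  then obtain M c e \<phi> where mo: "monoid_over_C2 M c e" and bij: "bij_betw \<phi> unit_quats M"
    and hom: "\<forall>p\<in>unit_quats. \<forall>q\<in>unit_quats. \<phi> (qmult p q) = tensor_mult c (\<phi> p) (\<phi> q)"
    by blast
  define qi where "qi = Quat 0 1 0 0"
  define qj where "qj = Quat 0 0 1 0"
  define qk where "qk = Quat 0 0 0 1"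
  define qk' where "qk' = Quat 0 0 0 (-1)"
  have U: "qi \<in> unit_quats" "qj \<in> unit_quats" "qk \<in> unit_quats" "qk' \<in> unit_quats"
    by (simp_all add: unit_quats_def qi_def qj_def qk_def qk'_def)
  have m1: "qmult qi qj = qk" and m2: "qmult qj qi = qk'"
    by (simp_all add: qmult_def qi_def qj_def qk_def qk'_def)
  have "qk \<noteq> qk'" by (simp add: qk_def qk'_def)
  then have ne: "\<phi> qk \<noteq> \<phi> qk'"
    using bij U unfolding bij_betw_def inj_on_def by blast
  have inM: "\<phi> qi \<in> M" "\<phi> qj \<in> M" using bij U bij_betwE by blast+
  have unit: "\<forall>m\<in>M. tensor_mult c e m = m \<and> tensor_mult c m e = m"
    using mo unfolding monoid_over_C2_def by blast
  have "tensor_mult c (\<phi> qi) (\<phi> qj) = tensor_mult c (\<phi> qj) (\<phi> qi)"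
    using inM unit by (intro tm_comm[of c e]) auto
  then have "\<phi> qk = \<phi> qk'" using hom U m1 m2 by metis
  with ne show False by simp
qed

end
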